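(* Let $G$ be a looped simple graph with vertices listed as $v_1,\dots,v_n$. The following are equivalent: (1) there is a sequence of $n-1$ pendant-twin reductions starting from $G$ in which the $i$-th reduction deletes the vertex $v_i$; (2) there is a sequence of $n-1$ isotropic parallel reductions starting from $M[IAS(G)]$ in which the $i$-th reduction removes the vertex triple of $v_i$.
   Context: A looped simple graph is a finite graph in which each vertex carries at most one loop and no two distinct vertices are joined by more than one edge. "Adjacent"/"neighbors" refer only to distinct vertices joined by a non-loop edge; $N_G(v)$ is the set of neighbors of $v$; the degree of $v$ is $|N_G(v)|$; $v$ is isolated if $N_G(v)=\emptyset$. $A(G)$ is the $V(G)\times V(G)$ matrix over $GF(2)$ with diagonal entry $1$ exactly at looped vertices and off-diagonal entry $1$ exactly for adjacent pairs. $IAS(G)=(I\mid A(G)\mid A(G)+I)$ over $GF(2)$, rows indexed by $V(G)$; the $v$-columns of the three blocks are labelled $\phi_G(v),\chi_G(v),\psi_G(v)$. $M[IAS(G)]$ is the binary column matroid of $IAS(G)$ on $W(G)=\{\phi_G(v),\chi_G(v),\psi_G(v):v\in V(G)\}$; $\tau_G(v)=\{\phi_G(v),\chi_G(v),\psi_G(v)\}$ is the vertex triple of $v$. Pendant-twin reduction of $G$: delete an isolated vertex; or delete a vertex $v$ that has a twin $w\neq v$, i.e. either $N_G(v)=N_G(w)\neq\emptyset$ (nonadjacent twins) or $N_G(v)\cup\{v\}=N_G(w)\cup\{w\}$ (adjacent twins); or delete a vertex of degree $1$. Isotropic parallel reduction: two elements are parallel in a matroid if both are loops or if they form a $2$-element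 circuit. If $\rho\ne\sigma$ are parallel elements of $M[IAS(G)]$ and $\rho$ is not of the form $\phi_G(\cdot)$, say $\rho\in\tau_G(v)$, the isotropic parallel reduction corresponding to $\rho,\sigma$ is the matroid obtained from $M[IAS(G)]$ by contracting $\phi_G(v)$ and deleting the other two elements of $\tau_G(v)$ (it "removes the vertex triple of $v$"); this matroid equals $M[IAS(G-v)]$ with the same element labels, so reductions can be iterated. *)

theory Defs
  imports Main "HOL-Library.Z2"
begin

text \<open>A looped simple graph: finite vertex set V, symmetric irreflexive adjacency E
on V (non-loop edges), and a set L \<subseteq> V of looped vertices (at most one loop each).\<close>

definition looped_graph :: "'a set \<Rightarrow> ('a \<Rightarrow> 'a \<Rightarrow> bool) \<Rightarrow> 'a set \<Rightarrow> bool" where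
  "looped_graph V E L \<longleftrightarrow> finite V \<and> L \<subseteq> V \<and>
     (\<forall>x y. E x y \<longrightarrow> x \<in> V \<and> y \<in> V) \<and> (\<forall>x y. E x y \<longrightarrow> E y x) \<and> (\<forall>x. \<not> E x x)"

definition nbhd :: "'a set \<Rightarrow> ('a \<Rightarrow> 'a \<Rightarrow> bool) \<Rightarrow> 'a \<Rightarrow> 'a set" where
  "nbhd V E v = {w \<in> V. w \<noteq> v \<and> E v w}"

definition del_V :: "'a set \<Rightarrow> 'a set \<Rightarrow> 'a set" where "del_V V X = V - X"
definition del_E :: "('a \<Rightarrow> 'a \<Rightarrow> bool) \<Rightarrow> 'a set \<Rightarrow> 'a \<Rightarrow> 'a \<Rightarrow> bool" where
  "del_E E X = (\<lambda>x y. E x y \<and> x \<notin> X \<and> y \<notin> X)"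
definition del_L :: "'a set \<Rightarrow> 'a set \<Rightarrow> 'a set" where "del_L L X = L - X"

definition pendant_twin_reduction :: "'a set \<Rightarrow> ('a \<Rightarrow> 'a \<Rightarrow> bool) \<Rightarrow> 'a set \<Rightarrow> 'a \<Rightarrow> bool" where
  "pendant_twin_reduction V E L v \<longleftrightarrow> v \<in> V \<and>
     (nbhd V E v = {}
      \<or> (\<exists>w\<in>V. w \<noteq> v \<and>
           ((nbhd V E v = nbhd V E w \<and> nbhd V E v \<noteq> {})
            \<or> nbhd V E v \<union> {v} = nbhd V E w \<union> {w}))
      \<or> card (nbhd V E v) = 1)"

datatype 'a elem = Phi 'a | Chi 'a | Psi 'a

definition ground :: "'a set \<Rightarrow> 'a elem set" where
  "ground V = {Phi v | v. v \<in> V} \<union> {Chi v | v. v \<in> V} \<union> {Psi v | v. v \<in> V}"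

definition vtriple :: "'a \<Rightarrow> 'a elem set" where
  "vtriple v = {Phi v, Chi v, Psi v}"

definition adj_mat :: "('a \<Rightarrow> 'a \<Rightarrow> bool) \<Rightarrow> 'a set \<Rightarrow> 'a \<Rightarrow> 'a \<Rightarrow> bit" where
  "adj_mat E L x y = (if x = y then (if x \<in> L then 1 else 0) else (if E x y then 1 else 0))"

text \<open>Columns of IAS(G) = (I | A(G) | A(G)+I); rows indexed by V (row w of column e).\<close>
fun ias_col :: "('a \<Rightarrow> 'a \<Rightarrow> bool) \<Rightarrow> 'a set \<Rightarrow> 'a elem \<Rightarrow> 'a \<Rightarrow> bit" where
  "ias_col E L (Phi v) w = (if w = v then 1 else 0)"
| "ias_col E L (Chi v) w = adj_mat E L w v"
| "ias_col E L (Psi v) w = adj_mat E L w v + (if w = v then 1 else 0)"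

text \<open>Dependent sets of the binary column matroid M[IAS(G)]: the columns indexed by S
are linearly dependent over GF(2), i.e. some nonempty subfamily sums to zero.\<close>
definition ias_dependent :: "'a set \<Rightarrow> ('a \<Rightarrow> 'a \<Rightarrow> bool) \<Rightarrow> 'a set \<Rightarrow> 'a elem set \<Rightarrow> bool" where
  "ias_dependent V E L S \<longleftrightarrow> S \<subseteq> ground V \<and>
     (\<exists>T\<subseteq>S. T \<noteq> {} \<and> (\<forall>w\<in>V. (\<Sum>e\<in>T. ias_col E L e w) = 0))"

definition ias_circuit :: "'a set \<Rightarrow> ('a \<Rightarrow> 'a \<Rightarrow> bool) \<Rightarrow> 'a set \<Rightarrow> 'a elem set \<Rightarrow> bool" where
  "ias_circuit V E L C \<longleftrightarrow> ias_dependent V E L C \<and> (\<forall>D. D \<subset> C \<longrightarrow> \<not> ias_dependent V E L D)"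

definition ias_parallel :: "'a set \<Rightarrow> ('a \<Rightarrow> 'a \<Rightarrow> bool) \<Rightarrow> 'a set \<Rightarrow> 'a elem \<Rightarrow> 'a elem \<Rightarrow> bool" where
  "ias_parallel V E L \<rho> \<sigma> \<longleftrightarrow>
     (ias_circuit V E L {\<rho>} \<and> ias_circuit V E L {\<sigma>})
     \<or> (\<rho> \<noteq> \<sigma> \<and> ias_circuit V E L {\<rho>, \<sigma>})"

text \<open>An isotropic parallel reduction of M[IAS(G)] removing the vertex triple of v:
there are parallel elements rho \<noteq> sigma with rho not of the form phi and rho in tau(v).
(The resulting matroid is M[IAS(G - v)].)\<close>
definition iso_parallel_reduction :: "'a set \<Rightarrow> ('a \<Rightarrow> 'a \<Rightarrow> bool) \<Rightarrow> 'a set \<Rightarrow> 'a \<Rightarrow> bool" where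
  "iso_parallel_reduction V E L v \<longleftrightarrow> v \<in> V \<and>
     (\<exists>\<rho>\<in>ground V. \<exists>\<sigma>\<in>ground V. \<rho> \<noteq> \<sigma> \<and> ias_parallel V E L \<rho> \<sigma> \<and>
        \<rho> \<in> vtriple v \<and> \<rho> \<noteq> Phi v)"

text \<open>Sequences of n-1 reductions along the list vs = [v_1,...,v_n]: the i-th reduction
(0-indexed i) acts on G - {v_1..v_i} and deletes vs!i.\<close>
definition pt_sequence :: "'a set \<Rightarrow> ('a \<Rightarrow> 'a \<Rightarrow> bool) \<Rightarrow> 'a set \<Rightarrow> 'a list \<Rightarrow> bool" where
  "pt_sequence V E L vs \<longleftrightarrow> (\<forall>i < length vs - 1.
     let X = set (take i vs) in
     pendant_twin_reduction (del_V V X) (del_E E X) (del_L L X) (vs ! i))"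

definition ipr_sequence :: "'a set \<Rightarrow> ('a \<Rightarrow> 'a \<Rightarrow> bool) \<Rightarrow> 'a set \<Rightarrow> 'a list \<Rightarrow> bool" where
  "ipr_sequence V E L vs \<longleftrightarrow> (\<forall>i < length vs - 1.
     let X = set (take i vs) in
     iso_parallel_reduction (del_V V X) (del_E E X) (del_L L X) (vs ! i))"

end

theory Submission imports Defs begin
lemma bit_add_eq0: "(x::bit) + y = 0 \<longleftrightarrow> x = y"
  by (cases x; cases y) simp_all

definition cs :: "'a set \<Rightarrow> ('a \<Rightarrow> 'a \<Rightarrow> bool) \<Rightarrow> 'a set \<Rightarrow> 'a elem \<Rightarrow> 'a set" where
  "cs V E L e = {w\<in>V. ias_col E L e w = 1}"

lemma zero_iff: "(\<forall>w\<in>V. ias_col E L e w = 0) \<longleftrightarrow> cs V E L e = {}"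
  unfolding cs_def by auto

lemma eq_iff: "(\<forall>w\<in>V. ias_col E L e w = ias_col E L f w) \<longleftrightarrow> cs V E L e = cs V E L f"
proof
  assume h: "cs V E L e = cs V E L f"
  show "\<forall>w\<in>V. ias_col E L e w = ias_col E L f w"
  proof
    fix w assume w: "w \<in> V"
    have "(w \<in> cs V E L e) = (w \<in> cs V E L f)" using h by (rule arg_cong)
    then have "(ias_col E L e w = 1) = (ias_col E L f w = 1)" using w unfolding cs_def by blast
    then show "ias_col E L e w = ias_col E L f w"
      by (cases "ias_col E L e w"; cases "ias_col E L f w") simp_all
  qed
next
  assume h: "\<forall>w\<in>V. ias_col E L e w = ias_col E L f w"
  show "cs V E L e = cs V E L f" unfolding cs_def
  proof (rule Collect_cong)
    fix w show "(w \<in> V \<and> ias_col E L e w = 1) = (w \<in> V \<and> ias_col E L f w = 1)"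
      using h by metis
  qed
qed

lemma dep1: "ias_dependent V E L {r} \<longleftrightarrow> r \<in> ground V \<and> cs V E L r = {}"
  unfolding ias_dependent_def zero_iff[symmetric]
  by (auto simp: subset_singleton_iff)

lemma circ1: "ias_circuit V E L {r} \<longleftrightarrow> r \<in> ground V \<and> cs V E L r = {}"
  unfolding ias_circuit_def dep1
  by (auto simp: ias_dependent_def)

lemma circ2: assumes "r \<noteq> s"
  shows "ias_circuit V E L {r,s} \<longleftrightarrow> r \<in> ground V \<and> s \<in> ground V \<and> cs V E L r \<noteq> {} \<and> cs V E L r = cs V E L s"
proof -
  have sub: "D \<subset> {r,s} \<longleftrightarrow> D = {} \<or> D = {r} \<or> D = {s}" for D using assms by auto
  have T: "T \<subseteq> {r,s} \<and> T \<noteq> {} \<longleftrightarrow> T = {r} \<or> T = {s} \<or> T = {r,s}" for T using assms by auto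
  have s2: "(\<forall>w\<in>V. (\<Sum>e\<in>{r,s}. ias_col E L e w) = 0) \<longleftrightarrow> cs V E L r = cs V E L s"
  proof -
    have "(\<Sum>e\<in>{r,s}. f e) = f r + f s" for f :: "_ \<Rightarrow> bit" using assms by simp
    then show ?thesis by (simp only: bit_add_eq0 eq_iff)
  qed
  have dep2: "ias_dependent V E L {r,s} \<longleftrightarrow> r \<in> ground V \<and> s \<in> ground V \<and>
     (cs V E L r = {} \<or> cs V E L s = {} \<or> cs V E L r = cs V E L s)"
  proof -
    have ex: "(\<exists>T\<subseteq>{r,s}. T \<noteq> {} \<and> P T) \<longleftrightarrow> P {r} \<or> P {s} \<or> P {r,s}" for P
    proof
      assume "\<exists>T\<subseteq>{r,s}. T \<noteq> {} \<and> P T"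
      then obtain T where "T \<subseteq> {r,s}" "T \<noteq> {}" "P T" by blast
      then have "T = {r} \<or> T = {s} \<or> T = {r,s}" using T[of T] by blast
      then show "P {r} \<or> P {s} \<or> P {r,s}" using \<open>P T\<close> by blast
    next
      assume "P {r} \<or> P {s} \<or> P {r,s}"
      then show "\<exists>T\<subseteq>{r,s}. T \<noteq> {} \<and> P T"
      proof (elim disjE)
        assume "P {r}" then show ?thesis by (intro exI[of _ "{r}"]) simp
      next
        assume "P {s}" then show ?thesis by (intro exI[of _ "{s}"]) simp
      next
        assume "P {r,s}" then show ?thesis by (intro exI[of _ "{r,s}"]) simp
      qed
    qed
    have "(\<forall>w\<in>V. (\<Sum>e\<in>{r}. ias_col E L e w) = 0) \<longleftrightarrow> cs V E L r = {}"
      by (simp add: zero_iff[symmetric])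
    moreover have "(\<forall>w\<in>V. (\<Sum>e\<in>{s}. ias_col E L e w) = 0) \<longleftrightarrow> cs V E L s = {}"
      by (simp add: zero_iff[symmetric])
    ultimately show ?thesis unfolding ias_dependent_def ex s2 insert_subset by simp
  qed
  have d0: "\<not> ias_dependent V E L {}" by (simp add: ias_dependent_def)
  have all: "(\<forall>D. D \<subset> {r,s} \<longrightarrow> \<not> ias_dependent V E L D) \<longleftrightarrow>
     \<not> ias_dependent V E L {} \<and> \<not> ias_dependent V E L {r} \<and> \<not> ias_dependent V E L {s}"
    unfolding sub by blast
  show ?thesis unfolding ias_circuit_def all dep1 dep2 using d0 by blast
qed

lemma par_iff: assumes "r \<noteq> s" "r \<in> ground V" "s \<in> ground V"
  shows "ias_parallel V E L r s \<longleftrightarrow> (cs V E L r = {} \<and> cs V E L s = {}) \<or> (cs V E L r \<noteq> {} \<and> cs V E L r = cs V E L s)"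
  unfolding ias_parallel_def circ1 circ2[OF assms(1)] using assms by blast

lemma cs_Phi: "u \<in> V \<Longrightarrow> cs V E L (Phi u) = {u}"
  by (auto simp: cs_def)

lemma cs_Chi: assumes sym: "\<forall>x y. E x y \<longrightarrow> E y x" and "u \<in> V"
  shows "cs V E L (Chi u) = nbhd V E u \<union> (if u \<in> L then {u} else {})"
  using assms by (auto simp: cs_def nbhd_def adj_mat_def)

lemma cs_Psi: assumes sym: "\<forall>x y. E x y \<longrightarrow> E y x" and "u \<in> V"
  shows "cs V E L (Psi u) = nbhd V E u \<union> (if u \<in> L then {} else {u})"
  using assms by (auto simp: cs_def nbhd_def adj_mat_def)

lemma nb_sym: assumes sym: "\<forall>x y. E x y \<longrightarrow> E y x" and "x \<in> V" "u \<in> V"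
  shows "x \<in> nbhd V E u \<longleftrightarrow> u \<in> nbhd V E x"
  using assms by (auto simp: nbhd_def)

lemma nb_self: "u \<notin> nbhd V E u" by (simp add: nbhd_def)

lemma pt_isol: "v \<in> V \<Longrightarrow> nbhd V E v = {} \<Longrightarrow> pendant_twin_reduction V E L v"
  unfolding pendant_twin_reduction_def by blast

lemma pt_nt: "v \<in> V \<Longrightarrow> w \<in> V \<Longrightarrow> w \<noteq> v \<Longrightarrow> nbhd V E v = nbhd V E w \<Longrightarrow> nbhd V E v \<noteq> {} \<Longrightarrow> pendant_twin_reduction V E L v"
  unfolding pendant_twin_reduction_def by blast

lemma pt_at: "v \<in> V \<Longrightarrow> w \<in> V \<Longrightarrow> w \<noteq> v \<Longrightarrow> nbhd V E v \<union> {v} = nbhd V E w \<union> {w} \<Longrightarrow> pendant_twin_reduction V E L v"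
  unfolding pendant_twin_reduction_def by blast

lemma pt_deg: "v \<in> V \<Longrightarrow> card (nbhd V E v) = 1 \<Longrightarrow> pendant_twin_reduction V E L v"
  unfolding pendant_twin_reduction_def by blast

lemma comb:
  assumes sym: "\<forall>x y. E x y \<longrightarrow> E y x" and v: "v \<in> V" and u: "u \<in> V"
    and eq: "nbhd V E v \<union> A = nbhd V E u \<union> B" and A: "A \<subseteq> {v}" and B: "B \<subseteq> {u}"
    and ne: "nbhd V E v \<union> A \<noteq> {}" and nd: "\<not> (u = v \<and> A = B)"
  shows "pendant_twin_reduction V E L v"
proof (cases "nbhd V E v = {}")
  case True then show ?thesis using v by (intro pt_isol)
next
  case nv: False
  have sv: "v \<notin> nbhd V E v" and su: "u \<notin> nbhd V E u" by (simp_all add: nb_self)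
  consider "A = {}" | "A = {v}" using A by blast
  then show ?thesis
  proof cases
    case A0: 1
    consider "B = {}" | "B = {u}" using B by blast
    then show ?thesis
    proof cases
      case 1
      then have "u \<noteq> v" using nd A0 by blast
      moreover have "nbhd V E v = nbhd V E u" using eq A0 1 by simp
      ultimately show ?thesis using v u nv by (intro pt_nt[of v V u]) auto
    next
      case 2
      then have "u \<in> nbhd V E v" using eq A0 by blast
      then have "v \<in> nbhd V E u" using nb_sym[OF sym u v] by blast
      then have "v \<in> nbhd V E v" using eq A0 by blast
      then show ?thesis using sv by blast
    qed
  next
    case A1: 2
    consider "B = {}" | "B = {u}" using B by blast
    then show ?thesis
    proof cases
      case 1
      then have "v \<in> nbhd V E u" using eq A1 by blast
      then have "u \<in> nbhd V E v" using nb_sym[OF sym v u] by blast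
      then have "u \<in> nbhd V E u" using eq 1 by blast
      then show ?thesis using su by blast
    next
      case 2
      then have "u \<noteq> v" using nd A1 by blast
      moreover have "nbhd V E v \<union> {v} = nbhd V E u \<union> {u}" using eq A1 2 by simp
      ultimately show ?thesis using v u by (intro pt_at[of v V u]) auto
    qed
  qed
qed

lemma comb_phi:
  assumes v: "v \<in> V" and eq: "nbhd V E v \<union> A = {u}" and A: "A \<subseteq> {v}"
  shows "pendant_twin_reduction V E L v"
proof -
  consider "A = {}" | "A = {v}" using A by blast
  then show ?thesis
  proof cases
    case 1
    then have "card (nbhd V E v) = 1" using eq by simp
    then show ?thesis using v by (rule pt_deg[rotated])
  next
    case 2
    then have "v \<in> {u}" using eq by (metis UnI2 insertI1)
    then have "nbhd V E v \<subseteq> {v}" using eq by (metis Un_upper1 singletonD)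
    then have "nbhd V E v = {}" using nb_self[of v V E] by (auto simp only: subset_singleton_iff)
    then show ?thesis using v by (intro pt_isol)
  qed
qed


lemma gr: "x \<in> V \<Longrightarrow> Phi x \<in> ground V \<and> Chi x \<in> ground V \<and> Psi x \<in> ground V"
  by (auto simp: ground_def)

lemma iso_intro: "v \<in> V \<Longrightarrow> r \<in> ground V \<Longrightarrow> s \<in> ground V \<Longrightarrow> r \<noteq> s \<Longrightarrow>
  ias_parallel V E L r s \<Longrightarrow> r \<in> vtriple v \<Longrightarrow> r \<noteq> Phi v \<Longrightarrow> iso_parallel_reduction V E L v"
  unfolding iso_parallel_reduction_def by blast

lemma key:
  assumes sym: "\<forall>x y. E x y \<longrightarrow> E y x" and v: "v \<in> V"
  shows "pendant_twin_reduction V E L v \<longleftrightarrow> iso_parallel_reduction V E L v"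
proof
  define Nv where "Nv = (if v \<in> L then Psi v else Chi v)"
  define Cv where "Cv = (if v \<in> L then Chi v else Psi v)"
  have cNv: "cs V E L Nv = nbhd V E v" unfolding Nv_def
    using cs_Chi[OF sym v, of L] cs_Psi[OF sym v, of L] by auto
  have cCv: "cs V E L Cv = nbhd V E v \<union> {v}" unfolding Cv_def
    using cs_Chi[OF sym v, of L] cs_Psi[OF sym v, of L] by auto
  have gNv: "Nv \<in> ground V" "Nv \<in> vtriple v" "Nv \<noteq> Phi v" unfolding Nv_def using gr[OF v]
    by (auto simp: vtriple_def)
  have gCv: "Cv \<in> ground V" "Cv \<in> vtriple v" "Cv \<noteq> Phi v" unfolding Cv_def using gr[OF v]
    by (auto simp: vtriple_def)
  assume pt: "pendant_twin_reduction V E L v"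
  have pt': "nbhd V E v = {} \<or> (\<exists>w\<in>V. w \<noteq> v \<and>
           ((nbhd V E v = nbhd V E w \<and> nbhd V E v \<noteq> {})
            \<or> nbhd V E v \<union> {v} = nbhd V E w \<union> {w}))
      \<or> card (nbhd V E v) = 1"
    using pt unfolding pendant_twin_reduction_def by (rule conjunct2)
  consider (iso) "nbhd V E v = {}"
    | (nt) w where "w \<in> V" "w \<noteq> v" "nbhd V E v = nbhd V E w" "nbhd V E v \<noteq> {}"
    | (at) w where "w \<in> V" "w \<noteq> v" "nbhd V E v \<union> {v} = nbhd V E w \<union> {w}"
    | (deg) "card (nbhd V E v) = 1"
  proof -
    from pt' show thesis
    proof (elim disjE bexE conjE)
      show "nbhd V E v = {} \<Longrightarrow> thesis" by (fact that(1))
      show "\<And>w. w \<in> V \<Longrightarrow> w \<noteq> v \<Longrightarrow> nbhd V E v = nbhd V E w \<Longrightarrow> nbhd V E v \<noteq> {} \<Longrightarrow> thesis" by (fact that(2))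
      show "\<And>w. w \<in> V \<Longrightarrow> w \<noteq> v \<Longrightarrow> nbhd V E v \<union> {v} = nbhd V E w \<union> {w} \<Longrightarrow> thesis" by (fact that(3))
      show "card (nbhd V E v) = 1 \<Longrightarrow> thesis" by (fact that(4))
    qed
  qed
  then show "iso_parallel_reduction V E L v"
  proof cases
    case iso
    have "Cv \<noteq> Phi v" by (rule gCv(3))
    have c1: "cs V E L Cv = {v}" using cCv iso by simp
    moreover have "ias_parallel V E L Cv (Phi v)"
      using par_iff[OF gCv(3) gCv(1) conjunct1[OF gr[OF v]]] c1 cs_Phi[OF v] by (metis insert_not_empty)
    ultimately show ?thesis using iso_intro[OF v gCv(1) conjunct1[OF gr[OF v]] _ _ gCv(2,3)] gCv(3) by blast
  next
    case (nt w)
    define Nw where "Nw = (if w \<in> L then Psi w else Chi w)"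
    have cNw: "cs V E L Nw = nbhd V E w" unfolding Nw_def
      using cs_Chi[OF sym nt(1), of L] cs_Psi[OF sym nt(1), of L] by auto
    have gNw: "Nw \<in> ground V" unfolding Nw_def using gr[OF nt(1)] by auto
    have ne: "Nv \<noteq> Nw" unfolding Nv_def Nw_def using nt(2) by auto
    have "ias_parallel V E L Nv Nw" using par_iff[OF ne gNv(1) gNw] cNv cNw nt by simp
    then show ?thesis using iso_intro[OF v gNv(1) gNw ne _ gNv(2,3)] by blast
  next
    case (at w)
    define Cw where "Cw = (if w \<in> L then Chi w else Psi w)"
    have cCw: "cs V E L Cw = nbhd V E w \<union> {w}" unfolding Cw_def
      using cs_Chi[OF sym at(1), of L] cs_Psi[OF sym at(1), of L] by auto
    have gCw: "Cw \<in> ground V" unfolding Cw_def using gr[OF at(1)] by auto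
    have ne: "Cv \<noteq> Cw" unfolding Cv_def Cw_def using at(2) by auto
    have "ias_parallel V E L Cv Cw" using par_iff[OF ne gCv(1) gCw] cCv cCw at by simp
    then show ?thesis using iso_intro[OF v gCv(1) gCw ne _ gCv(2,3)] by blast
  next
    case deg
    then obtain u where u: "nbhd V E v = {u}" by (rule card_1_singletonE)
    then have uV: "u \<in> V" by (auto simp: nbhd_def)
    have ne: "Nv \<noteq> Phi u" unfolding Nv_def by auto
    have "ias_parallel V E L Nv (Phi u)" using par_iff[OF ne gNv(1) conjunct1[OF gr[OF uV]]] cNv cs_Phi[OF uV] u by simp
    then show ?thesis using iso_intro[OF v gNv(1) conjunct1[OF gr[OF uV]] ne _ gNv(2,3)] by blast
  qed
next
  assume "iso_parallel_reduction V E L v"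
  then obtain r s where r: "r \<in> ground V" and s: "s \<in> ground V" and rs: "r \<noteq> s"
    and par: "ias_parallel V E L r s" and rv: "r \<in> vtriple v" "r \<noteq> Phi v"
    unfolding iso_parallel_reduction_def by blast
  have rcases: "r = Chi v \<or> r = Psi v" using rv by (auto simp: vtriple_def)
  obtain u where u: "u \<in> V" and scases: "s = Phi u \<or> s = Chi u \<or> s = Psi u"
    using s by (auto simp: ground_def)
  have csr: "nbhd V E v \<subseteq> cs V E L r" using rcases cs_Chi[OF sym v, of L] cs_Psi[OF sym v, of L] by auto
  have pc: "(cs V E L r = {} \<and> cs V E L s = {}) \<or> (cs V E L r \<noteq> {} \<and> cs V E L r = cs V E L s)"
    using par_iff[OF rs r s] par by simp
  show "pendant_twin_reduction V E L v"
  proof (cases "cs V E L r = {}")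
    case True
    then have "nbhd V E v = {}" using csr by blast
    then show ?thesis using v by (intro pt_isol)
  next
    case False
    with pc have eq: "cs V E L r = cs V E L s" by blast
    note CC = cs_Chi[OF sym v, of L] cs_Psi[OF sym v, of L] cs_Chi[OF sym u, of L] cs_Psi[OF sym u, of L] cs_Phi[OF u]
    from rcases scases show ?thesis
    proof (elim disjE)
      assume "r = Chi v" "s = Phi u" then show ?thesis
        using eq CC by (intro comb_phi[OF v, where A="if v \<in> L then {v} else {}" and u=u]) auto
    next
      assume "r = Psi v" "s = Phi u" then show ?thesis
        using eq CC by (intro comb_phi[OF v, where A="if v \<in> L then {} else {v}" and u=u]) auto
    next
      assume h: "r = Chi v" "s = Chi u" then show ?thesis
        using eq CC rs False by (intro comb[OF sym v u, where A="if v \<in> L then {v} else {}" and B="if u \<in> L then {u} else {}"]) auto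
    next
      assume h: "r = Psi v" "s = Chi u" then show ?thesis
        using eq CC rs False by (intro comb[OF sym v u, where A="if v \<in> L then {} else {v}" and B="if u \<in> L then {u} else {}"]) auto
    next
      assume h: "r = Chi v" "s = Psi u" then show ?thesis
        using eq CC rs False by (intro comb[OF sym v u, where A="if v \<in> L then {v} else {}" and B="if u \<in> L then {} else {u}"]) auto
    next
      assume h: "r = Psi v" "s = Psi u" then show ?thesis
        using eq CC rs False by (intro comb[OF sym v u, where A="if v \<in> L then {} else {v}" and B="if u \<in> L then {} else {u}"]) auto
    qed
  qed
qed


lemma nth_notin_take: "distinct vs \<Longrightarrow> i < length vs \<Longrightarrow> vs ! i \<notin> set (take i vs)"
  by (smt (verit, best) in_set_conv_nth less_or_eq_imp_le linorder_neqE
    nth_eq_iff_index_eq nth_take nth_take_lemma order_antisym_conv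
    order_less_imp_not_eq order_less_trans take_all_iff)

theorem corollary9p7:
  fixes V :: "'a set" and E :: "'a \<Rightarrow> 'a \<Rightarrow> bool" and L :: "'a set" and vs :: "'a list"
  assumes "looped_graph V E L"
    and "distinct vs" and "set vs = V"
  shows "pt_sequence V E L vs \<longleftrightarrow> ipr_sequence V E L vs"
proof -
  have sym: "\<forall>x y. E x y \<longrightarrow> E y x" using assms(1) by (simp add: looped_graph_def)
  have step: "pendant_twin_reduction (del_V V (set (take i vs))) (del_E E (set (take i vs))) (del_L L (set (take i vs))) (vs ! i)
     \<longleftrightarrow> iso_parallel_reduction (del_V V (set (take i vs))) (del_E E (set (take i vs))) (del_L L (set (take i vs))) (vs ! i)"
    if i: "i < length vs - 1" for i
  proof (rule key)
    show "\<forall>x y. del_E E (set (take i vs)) x y \<longrightarrow> del_E E (set (take i vs)) y x"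
      using sym by (simp add: del_E_def)
    have "i < length vs" using i by simp
    then show "vs ! i \<in> del_V V (set (take i vs))"
      using nth_notin_take[OF assms(2)] assms(3) nth_mem by (auto simp: del_V_def)
  qed
  show ?thesis unfolding pt_sequence_def ipr_sequence_def Let_def
  proof (intro iffI allI impI)
    fix i assume "\<forall>i<length vs - 1. pendant_twin_reduction (del_V V (set (take i vs))) (del_E E (set (take i vs))) (del_L L (set (take i vs))) (vs ! i)"
      and i: "i < length vs - 1"
    then show "iso_parallel_reduction (del_V V (set (take i vs))) (del_E E (set (take i vs))) (del_L L (set (take i vs))) (vs ! i)"
      using step[OF i] by blast
  next
    fix i assume "\<forall>i<length vs - 1. iso_parallel_reduction (del_V V (set (take i vs))) (del_E E (set (take i vs))) (del_L L (set (take i vs))) (vs ! i)"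
      and i: "i < length vs - 1"
    then show "pendant_twin_reduction (del_V V (set (take i vs))) (del_E E (set (take i vs))) (del_L L (set (take i vs))) (vs ! i)"
      using step[OF i] by blast
  qed
qed

end
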